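(* Let $B$ be a connected graded commutative algebra over a field $\mathbb{F}$ admitting an action by graded algebra automorphisms of a finite group $\Gamma$ whose order is prime to the characteristic of $\mathbb{F}$, and let $A$ be a graded $\mathbb{F}$-subalgebra of the invariant ring $B^\Gamma$. If $B/\!\!/A=B/\!\!/B^\Gamma$ (i.e. the ideals of $B$ generated by $A^{\geq1}$ and by $(B^\Gamma)^{\geq1}$ coincide), then $A=B^\Gamma$.
   Context: For a connected graded algebra $C$, $C^{\geq1}$ denotes its augmentation ideal (elements of positive degree). For a map $A\to B$ of connected graded algebras, $B/\!\!/A$ denotes $B/f(A^{\geq1})B$. *)

theory Defs
  imports "HOL-Algebra.Group"
begin

text \<open>A graded algebra B over a field k is modelled by a ring type 'b (the carrier is UNIV),
  a scalar multiplication sm, and the homogeneous pieces Bd n (n = degree).\<close>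

definition is_decomp :: "(nat \<Rightarrow> 'b::ring_1 set) \<Rightarrow> 'b \<Rightarrow> (nat \<Rightarrow> 'b) \<Rightarrow> bool" where
  "is_decomp Bd x c \<longleftrightarrow>
     (\<forall>n. c n \<in> Bd n) \<and> finite {n. c n \<noteq> 0} \<and> x = sum c {n. c n \<noteq> 0}"

definition hcomp :: "(nat \<Rightarrow> 'b::ring_1 set) \<Rightarrow> nat \<Rightarrow> 'b \<Rightarrow> 'b" where
  "hcomp Bd n x = (THE c. is_decomp Bd x c) n"

definition graded_algebra :: "('k::field \<Rightarrow> 'b::ring_1 \<Rightarrow> 'b) \<Rightarrow> (nat \<Rightarrow> 'b set) \<Rightarrow> bool" where
  "graded_algebra sm Bd \<longleftrightarrow>
     (\<forall>x. sm 1 x = x) \<and>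
     (\<forall>c d x. sm c (sm d x) = sm (c * d) x) \<and>
     (\<forall>c d x. sm (c + d) x = sm c x + sm d x) \<and>
     (\<forall>c x y. sm c (x + y) = sm c x + sm c y) \<and>
     (\<forall>c x y. sm c (x * y) = sm c x * y) \<and>
     (\<forall>c x y. sm c (x * y) = x * sm c y) \<and>
     (\<forall>n. 0 \<in> Bd n \<and> (\<forall>x\<in>Bd n. \<forall>y\<in>Bd n. x + y \<in> Bd n) \<and> (\<forall>c. \<forall>x\<in>Bd n. sm c x \<in> Bd n)) \<and>
     1 \<in> Bd 0 \<and>
     (\<forall>m n x y. x \<in> Bd m \<longrightarrow> y \<in> Bd n \<longrightarrow> x * y \<in> Bd (m + n)) \<and>
     (\<forall>x. \<exists>!c. is_decomp Bd x c)"

definition connected_graded :: "('k::field \<Rightarrow> 'b::ring_1 \<Rightarrow> 'b) \<Rightarrow> (nat \<Rightarrow> 'b set) \<Rightarrow> bool" where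
  "connected_graded sm Bd \<longleftrightarrow> Bd 0 = range (\<lambda>c. sm c 1)"

text \<open>Graded commutativity with sign eps (eps = 1: strictly commutative; eps = -1: Koszul signs).\<close>
definition graded_comm :: "(nat \<Rightarrow> 'b::ring_1 set) \<Rightarrow> 'b \<Rightarrow> bool" where
  "graded_comm Bd eps \<longleftrightarrow>
     (\<forall>m n x y. x \<in> Bd m \<longrightarrow> y \<in> Bd n \<longrightarrow> x * y = eps ^ (m * n) * (y * x))"

definition graded_action ::
  "('k::field \<Rightarrow> 'b::ring_1 \<Rightarrow> 'b) \<Rightarrow> (nat \<Rightarrow> 'b set) \<Rightarrow> ('g, 'm) monoid_scheme \<Rightarrow> ('g \<Rightarrow> 'b \<Rightarrow> 'b) \<Rightarrow> bool" where
  "graded_action sm Bd G act \<longleftrightarrow>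
     (\<forall>x. act \<one>\<^bsub>G\<^esub> x = x) \<and>
     (\<forall>g\<in>carrier G. \<forall>h\<in>carrier G. \<forall>x. act (g \<otimes>\<^bsub>G\<^esub> h) x = act g (act h x)) \<and>
     (\<forall>g\<in>carrier G.
        (\<forall>x y. act g (x + y) = act g x + act g y) \<and>
        (\<forall>x y. act g (x * y) = act g x * act g y) \<and>
        act g 1 = 1 \<and>
        (\<forall>c x. act g (sm c x) = sm c (act g x)) \<and>
        (\<forall>n x. x \<in> Bd n \<longrightarrow> act g x \<in> Bd n))"

definition invariants :: "('g, 'm) monoid_scheme \<Rightarrow> ('g \<Rightarrow> 'b \<Rightarrow> 'b) \<Rightarrow> 'b set" where
  "invariants G act = {x. \<forall>g\<in>carrier G. act g x = x}"

definition graded_subalgebra :: "('k::field \<Rightarrow> 'b::ring_1 \<Rightarrow> 'b) \<Rightarrow> (nat \<Rightarrow> 'b set) \<Rightarrow> 'b set \<Rightarrow> bool" where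
  "graded_subalgebra sm Bd A \<longleftrightarrow>
     1 \<in> A \<and>
     (\<forall>x\<in>A. \<forall>y\<in>A. x + y \<in> A) \<and>
     (\<forall>x\<in>A. \<forall>y\<in>A. x * y \<in> A) \<and>
     (\<forall>c. \<forall>x\<in>A. sm c x \<in> A) \<and>
     (\<forall>x\<in>A. \<forall>n. hcomp Bd n x \<in> A)"

definition aug :: "(nat \<Rightarrow> 'b::ring_1 set) \<Rightarrow> 'b set \<Rightarrow> 'b set" where
  "aug Bd C = {x \<in> C. hcomp Bd 0 x = 0}"

text \<open>The (right) ideal X B of B generated by X: finite sums of x * b with x in X.\<close>
definition ideal_gen :: "'b::ring_1 set \<Rightarrow> 'b set" where
  "ideal_gen X = {y. \<exists>k (x :: nat \<Rightarrow> 'b) b. (\<forall>i<k. x i \<in> X) \<and> y = (\<Sum>i<k. x i * b i)}"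

end

theory Submission
  imports Defs
begin

lemma ex1_decomp:
  fixes sm :: "'k::field \<Rightarrow> 'b::ring_1 \<Rightarrow> 'b"
  assumes GA: "graded_algebra sm Bd"
  shows "\<exists>!c. is_decomp Bd x c"
proof -
  have "\<forall>x. Ex1 (is_decomp Bd x)" using GA unfolding graded_algebra_def
    by (elim conjE) assumption
  then show ?thesis by simp
qed

lemma hcomp_eq:
  fixes sm :: "'k::field \<Rightarrow> 'b::ring_1 \<Rightarrow> 'b"
  assumes GA: "graded_algebra sm Bd" and c: "\<forall>n. c n \<in> Bd n" and z: "\<forall>n\<ge>N. c n = 0"
    and x: "x = (\<Sum>n<N. c n)"
  shows "hcomp Bd n x = c n"
proof -
  have S: "{n. c n \<noteq> 0} \<subseteq> {..<N}" using z by (auto simp: not_less[symmetric])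
  have "is_decomp Bd x c"
    unfolding is_decomp_def
  proof (intro conjI)
    show "finite {n. c n \<noteq> 0}" using S finite_subset by blast
    show "x = sum c {n. c n \<noteq> 0}" unfolding x
      by (rule sum.mono_neutral_right) (use S in auto)
  qed (use c in auto)
  moreover have "\<exists>!c. is_decomp Bd x c" using ex1_decomp[OF GA] .
  ultimately have "(THE c. is_decomp Bd x c) = c" by (simp add: the1_equality)
  thus ?thesis unfolding hcomp_def by simp
qed

lemma hcomp_props:
  fixes sm :: "'k::field \<Rightarrow> 'b::ring_1 \<Rightarrow> 'b"
  assumes GA: "graded_algebra sm Bd"
  shows "\<exists>N. (\<forall>n. hcomp Bd n x \<in> Bd n) \<and> (\<forall>n\<ge>N. hcomp Bd n x = 0) \<and> x = (\<Sum>n<N. hcomp Bd n x)"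
proof -
  have ex: "\<exists>!c. is_decomp Bd x c" using ex1_decomp[OF GA] .
  then obtain c where c: "is_decomp Bd x c" by blast
  have hc: "hcomp Bd n x = c n" for n unfolding hcomp_def using the1_equality[of "is_decomp Bd x" c] ex c by simp
  have fin: "finite {n. c n \<noteq> 0}" using c unfolding is_decomp_def by blast
  then obtain N where N: "{n. c n \<noteq> 0} \<subseteq> {..<N}" using finite_nat_set_iff_bounded[of "{n. c n \<noteq> 0}"] by auto
  have z: "\<forall>n\<ge>N. c n = 0" using N by (auto simp: not_less[symmetric])
  have "x = sum c {n. c n \<noteq> 0}" using c unfolding is_decomp_def by blast
  also have "\<dots> = sum c {..<N}"
    by (rule sum.mono_neutral_left) (use N in auto)
  finally show ?thesis using c z hc unfolding is_decomp_def by auto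
qed

lemma ga_add:
  fixes sm :: "'k::field \<Rightarrow> 'b::ring_1 \<Rightarrow> 'b"
  assumes GA: "graded_algebra sm Bd"
  shows "x \<in> Bd n \<Longrightarrow> y \<in> Bd n \<Longrightarrow> x + y \<in> Bd n"
  using GA unfolding graded_algebra_def by (elim conjE) simp

lemma ga_zero:
  fixes sm :: "'k::field \<Rightarrow> 'b::ring_1 \<Rightarrow> 'b"
  assumes GA: "graded_algebra sm Bd"
  shows "0 \<in> Bd n"
  using GA unfolding graded_algebra_def by (elim conjE) simp

lemma ga_mul:
  fixes sm :: "'k::field \<Rightarrow> 'b::ring_1 \<Rightarrow> 'b"
  assumes GA: "graded_algebra sm Bd"
  shows "x \<in> Bd m \<Longrightarrow> y \<in> Bd n \<Longrightarrow> x * y \<in> Bd (m + n)"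
  using GA unfolding graded_algebra_def by (elim conjE) simp

lemma ga_sm1:
  fixes sm :: "'k::field \<Rightarrow> 'b::ring_1 \<Rightarrow> 'b"
  assumes GA: "graded_algebra sm Bd"
  shows "sm 1 x = x"
  using GA unfolding graded_algebra_def by (elim conjE) simp

lemma ga_smsm:
  fixes sm :: "'k::field \<Rightarrow> 'b::ring_1 \<Rightarrow> 'b"
  assumes GA: "graded_algebra sm Bd"
  shows "sm c (sm d x) = sm (c * d) x"
  using GA unfolding graded_algebra_def by (elim conjE) simp

lemma ga_smadd:
  fixes sm :: "'k::field \<Rightarrow> 'b::ring_1 \<Rightarrow> 'b"
  assumes GA: "graded_algebra sm Bd"
  shows "sm (c + d) x = sm c x + sm d x"
  using GA unfolding graded_algebra_def by (elim conjE) simp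

lemma ga_smaddr:
  fixes sm :: "'k::field \<Rightarrow> 'b::ring_1 \<Rightarrow> 'b"
  assumes GA: "graded_algebra sm Bd"
  shows "sm c (x + y) = sm c x + sm c y"
  using GA unfolding graded_algebra_def by (elim conjE) simp

lemma ga_smmul:
  fixes sm :: "'k::field \<Rightarrow> 'b::ring_1 \<Rightarrow> 'b"
  assumes GA: "graded_algebra sm Bd"
  shows "sm c (x * y) = x * sm c y"
  using GA unfolding graded_algebra_def by (elim conjE) simp

lemma sm_zero:
  fixes sm :: "'k::field \<Rightarrow> 'b::ring_1 \<Rightarrow> 'b"
  assumes GA: "graded_algebra sm Bd"
  shows "sm 0 x = 0"
  using ga_smadd[OF GA, of 0 0 x] by simp

lemma sm_zero_r:
  fixes sm :: "'k::field \<Rightarrow> 'b::ring_1 \<Rightarrow> 'b"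
  assumes GA: "graded_algebra sm Bd"
  shows "sm c 0 = 0"
  using ga_smaddr[OF GA, of c 0 0] by simp

lemma sm_of_nat:
  fixes sm :: "'k::field \<Rightarrow> 'b::ring_1 \<Rightarrow> 'b"
  assumes GA: "graded_algebra sm Bd"
  shows "sm (of_nat m) x = of_nat m * x"
proof (induction m)
  case 0 then show ?case using sm_zero[OF GA] by simp
next
  case (Suc m)
  have "sm (of_nat (Suc m)) x = sm 1 x + sm (of_nat m) x" using ga_smadd[OF GA] by simp
  also have "\<dots> = x + of_nat m * x" using Suc ga_sm1[OF GA] by simp
  also have "\<dots> = of_nat (Suc m) * x" by (simp add: distrib_right)
  finally show ?case .
qed

lemma Bd_sum:
  fixes sm :: "'k::field \<Rightarrow> 'b::ring_1 \<Rightarrow> 'b"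
  assumes GA: "graded_algebra sm Bd" and "finite S" and "\<forall>i\<in>S. f i \<in> Bd n"
  shows "sum f S \<in> Bd n"
  using assms(2,3)
proof (induction S rule: finite_induct)
  case empty then show ?case using ga_zero[OF GA] by simp
next
  case (insert a S) then show ?case using ga_add[OF GA] by simp
qed

lemma sum_extend:
  fixes h :: "nat \<Rightarrow> 'b::comm_monoid_add"
  assumes "\<forall>n\<ge>N1. h n = 0" "N1 \<le> N"
  shows "sum h {..<N1} = sum h {..<N}"
  by (rule sum.mono_neutral_left) (use assms in auto)

lemma hcomp_add:
  fixes sm :: "'k::field \<Rightarrow> 'b::ring_1 \<Rightarrow> 'b"
  assumes GA: "graded_algebra sm Bd"
  shows "hcomp Bd n (x + y) = hcomp Bd n x + hcomp Bd n y"
proof -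
  obtain N1 where N1: "(\<forall>n. hcomp Bd n x \<in> Bd n) \<and> (\<forall>n\<ge>N1. hcomp Bd n x = 0) \<and> x = (\<Sum>n<N1. hcomp Bd n x)"
    using hcomp_props[OF GA] by blast
  obtain N2 where N2: "(\<forall>n. hcomp Bd n y \<in> Bd n) \<and> (\<forall>n\<ge>N2. hcomp Bd n y = 0) \<and> y = (\<Sum>n<N2. hcomp Bd n y)"
    using hcomp_props[OF GA] by blast
  define N where "N = max N1 N2"
  have x: "x = (\<Sum>n<N. hcomp Bd n x)"
    using N1 sum_extend[of N1 "\<lambda>n. hcomp Bd n x" N] N_def by simp
  have y: "y = (\<Sum>n<N. hcomp Bd n y)"
    using N2 sum_extend[of N2 "\<lambda>n. hcomp Bd n y" N] N_def by simp
  show ?thesis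
  proof (rule hcomp_eq[OF GA])
    show "\<forall>n. hcomp Bd n x + hcomp Bd n y \<in> Bd n" using N1 N2 ga_add[OF GA] by blast
    show "\<forall>n\<ge>N. hcomp Bd n x + hcomp Bd n y = 0" using N1 N2 N_def by auto
    show "x + y = (\<Sum>n<N. hcomp Bd n x + hcomp Bd n y)" using x y by (simp add: sum.distrib)
  qed
qed

lemma hcomp_zero:
  fixes sm :: "'k::field \<Rightarrow> 'b::ring_1 \<Rightarrow> 'b"
  assumes GA: "graded_algebra sm Bd"
  shows "hcomp Bd n 0 = 0"
  by (rule hcomp_eq[OF GA, where N=0]) (use ga_zero[OF GA] in auto)

lemma hcomp_sum:
  fixes sm :: "'k::field \<Rightarrow> 'b::ring_1 \<Rightarrow> 'b"
  assumes GA: "graded_algebra sm Bd"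
  shows "hcomp Bd n (sum f S) = (\<Sum>i\<in>S. hcomp Bd n (f i))"
  by (rule sum_comp_morphism[symmetric, unfolded o_def]) (auto simp: hcomp_zero[OF GA] hcomp_add[OF GA])

lemma hcomp_hom:
  fixes sm :: "'k::field \<Rightarrow> 'b::ring_1 \<Rightarrow> 'b"
  assumes GA: "graded_algebra sm Bd" and "x \<in> Bd m"
  shows "hcomp Bd n x = (if n = m then x else 0)"
proof (rule hcomp_eq[OF GA, where N="Suc m"])
  show "\<forall>n. (if n = m then x else 0) \<in> Bd n" using assms ga_zero[OF GA] by auto
  show "\<forall>n\<ge>Suc m. (if n = m then x else 0) = 0" by auto
  have "(\<Sum>n<Suc m. (if n = m then x else 0)) = x" by (subst sum.delta) auto
  then show "x = (\<Sum>n<Suc m. (if n = m then x else 0))" by simp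
qed

lemma act_add:
  assumes "graded_action sm Bd G act" "g \<in> carrier G"
  shows "act g (x + y) = act g x + act g y"
  using assms unfolding graded_action_def by (elim conjE) simp

lemma act_mul:
  assumes "graded_action sm Bd G act" "g \<in> carrier G"
  shows "act g (x * y) = act g x * act g y"
  using assms unfolding graded_action_def by (elim conjE) simp

lemma act_sm:
  assumes "graded_action sm Bd G act" "g \<in> carrier G"
  shows "act g (sm c x) = sm c (act g x)"
  using assms unfolding graded_action_def by (elim conjE) simp

lemma act_Bd:
  assumes "graded_action sm Bd G act" "g \<in> carrier G"
  shows "x \<in> Bd n \<Longrightarrow> act g x \<in> Bd n"
  using assms unfolding graded_action_def by (elim conjE) simp

lemma act_comp:
  assumes "graded_action sm Bd G act" "g \<in> carrier G" "h \<in> carrier G"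
  shows "act (g \<otimes>\<^bsub>G\<^esub> h) x = act g (act h x)"
  using assms unfolding graded_action_def by (elim conjE) simp

lemma act_zero:
  fixes act :: "'g \<Rightarrow> 'b::ring_1 \<Rightarrow> 'b"
  assumes "graded_action sm Bd G act" "g \<in> carrier G"
  shows "act g 0 = 0"
  using act_add[OF assms, of 0 0] by simp

lemma act_sum:
  fixes act :: "'g \<Rightarrow> 'b::ring_1 \<Rightarrow> 'b"
  assumes "graded_action sm Bd G act" "g \<in> carrier G"
  shows "act g (sum f S) = (\<Sum>i\<in>S. act g (f i))"
  by (rule sum_comp_morphism[symmetric, unfolded o_def]) (auto simp: act_zero[OF assms] act_add[OF assms])

lemma act_hcomp:
  fixes sm :: "'k::field \<Rightarrow> 'b::ring_1 \<Rightarrow> 'b"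
  assumes GA: "graded_algebra sm Bd" and GAct: "graded_action sm Bd G act" and g: "g \<in> carrier G"
  shows "hcomp Bd n (act g x) = act g (hcomp Bd n x)"
proof -
  obtain N where N: "(\<forall>n. hcomp Bd n x \<in> Bd n) \<and> (\<forall>n\<ge>N. hcomp Bd n x = 0) \<and> x = (\<Sum>n<N. hcomp Bd n x)"
    using hcomp_props[OF GA] by blast
  show ?thesis
  proof (rule hcomp_eq[OF GA, where N=N])
    show "\<forall>n. act g (hcomp Bd n x) \<in> Bd n" using N act_Bd[OF GAct g] by blast
    show "\<forall>n\<ge>N. act g (hcomp Bd n x) = 0" using N act_zero[OF GAct g] by simp
    have xe: "x = (\<Sum>n<N. hcomp Bd n x)" using N by blast
    have "act g x = act g (\<Sum>n<N. hcomp Bd n x)" by (rule arg_cong[OF xe])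
    then show "act g x = (\<Sum>n<N. act g (hcomp Bd n x))" using act_sum[OF GAct g] by simp
  qed
qed

lemma inv_hcomp:
  fixes sm :: "'k::field \<Rightarrow> 'b::ring_1 \<Rightarrow> 'b"
  assumes GA: "graded_algebra sm Bd" and GAct: "graded_action sm Bd G act"
    and x: "x \<in> invariants G act"
  shows "hcomp Bd n x \<in> invariants G act"
  unfolding invariants_def
proof (intro CollectI ballI)
  fix g assume g: "g \<in> carrier G"
  have "act g x = x" using x g unfolding invariants_def by blast
  then show "act g (hcomp Bd n x) = hcomp Bd n x" using act_hcomp[OF GA GAct g, of n x] by simp
qed

definition reyn :: "('k::field \<Rightarrow> 'b::ring_1 \<Rightarrow> 'b) \<Rightarrow> ('g, 'm) monoid_scheme \<Rightarrow> ('g \<Rightarrow> 'b \<Rightarrow> 'b) \<Rightarrow> 'b \<Rightarrow> 'b" where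
  "reyn sm G act x = sm (inverse (of_nat (card (carrier G)))) (\<Sum>g\<in>carrier G. act g x)"

lemma reyn_inv:
  fixes sm :: "'k::field \<Rightarrow> 'b::ring_1 \<Rightarrow> 'b"
  assumes GA: "graded_algebra sm Bd" and GAct: "graded_action sm Bd G act"
    and grp: "group G"
  shows "reyn sm G act x \<in> invariants G act"
  unfolding invariants_def
proof (intro CollectI ballI)
  fix h assume h: "h \<in> carrier G"
  have "(\<Sum>g\<in>carrier G. act h (act g x)) = (\<Sum>g\<in>carrier G. act (h \<otimes>\<^bsub>G\<^esub> g) x)"
    using act_comp[OF GAct h] by simp
  also have "\<dots> = (\<Sum>g\<in>(\<lambda>g. h \<otimes>\<^bsub>G\<^esub> g) ` carrier G. act g x)"
    by (rule sum.reindex[symmetric, unfolded o_def]) (rule group.inj_on_cmult[OF grp h])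
  also have "\<dots> = (\<Sum>g\<in>carrier G. act g x)" using group.surj_const_mult[OF grp h] by simp
  finally show "act h (reyn sm G act x) = reyn sm G act x"
    unfolding reyn_def act_sm[OF GAct h] act_sum[OF GAct h] by simp
qed

lemma reyn_lin:
  fixes sm :: "'k::field \<Rightarrow> 'b::ring_1 \<Rightarrow> 'b"
  assumes GA: "graded_algebra sm Bd" and GAct: "graded_action sm Bd G act"
    and a: "a \<in> invariants G act"
  shows "reyn sm G act (a * b) = a * reyn sm G act b"
proof -
  have "(\<Sum>g\<in>carrier G. act g (a * b)) = (\<Sum>g\<in>carrier G. a * act g b)"
    using a act_mul[OF GAct] unfolding invariants_def by simp
  also have "\<dots> = a * (\<Sum>g\<in>carrier G. act g b)" by (simp add: sum_distrib_left)
  finally show ?thesis unfolding reyn_def using ga_smmul[OF GA] by simp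
qed

lemma reyn_fix:
  fixes sm :: "'k::field \<Rightarrow> 'b::ring_1 \<Rightarrow> 'b"
  assumes GA: "graded_algebra sm Bd"
    and card: "of_nat (card (carrier G)) \<noteq> (0::'k)"
    and f: "f \<in> invariants G act"
  shows "reyn sm G act f = f"
proof -
  have "(\<Sum>g\<in>carrier G. act g f) = (\<Sum>g\<in>carrier G. f)"
    using f unfolding invariants_def by simp
  also have "\<dots> = of_nat (card (carrier G)) * f" by simp
  also have "\<dots> = sm (of_nat (card (carrier G))) f" using sm_of_nat[OF GA] by simp
  finally show ?thesis unfolding reyn_def using ga_smsm[OF GA] ga_sm1[OF GA] card by simp
qed

lemma reyn_add:
  fixes sm :: "'k::field \<Rightarrow> 'b::ring_1 \<Rightarrow> 'b"
  assumes GA: "graded_algebra sm Bd" and GAct: "graded_action sm Bd G act"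
  shows "reyn sm G act (x + y) = reyn sm G act x + reyn sm G act y"
  unfolding reyn_def using act_add[OF GAct] ga_smaddr[OF GA] by (simp add: sum.distrib)

lemma reyn_zero:
  fixes sm :: "'k::field \<Rightarrow> 'b::ring_1 \<Rightarrow> 'b"
  assumes GA: "graded_algebra sm Bd" and GAct: "graded_action sm Bd G act"
  shows "reyn sm G act 0 = 0"
  unfolding reyn_def using act_zero[OF GAct] sm_zero_r[OF GA] by simp

lemma reyn_sum:
  fixes sm :: "'k::field \<Rightarrow> 'b::ring_1 \<Rightarrow> 'b"
  assumes GA: "graded_algebra sm Bd" and GAct: "graded_action sm Bd G act"
  shows "reyn sm G act (sum f S) = (\<Sum>i\<in>S. reyn sm G act (f i))"
  by (rule sum_comp_morphism[symmetric, unfolded o_def]) (auto simp: reyn_zero[OF GA GAct] reyn_add[OF GA GAct])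

lemma A_zero:
  fixes sm :: "'k::field \<Rightarrow> 'b::ring_1 \<Rightarrow> 'b"
  assumes GA: "graded_algebra sm Bd" and SA: "graded_subalgebra sm Bd A"
  shows "0 \<in> A"
proof -
  have "sm 0 1 \<in> A" using SA unfolding graded_subalgebra_def by blast
  then show ?thesis using sm_zero[OF GA] by simp
qed

lemma A_sum:
  fixes sm :: "'k::field \<Rightarrow> 'b::ring_1 \<Rightarrow> 'b"
  assumes GA: "graded_algebra sm Bd" and SA: "graded_subalgebra sm Bd A"
    and "finite S" and "\<forall>i\<in>S. f i \<in> A"
  shows "sum f S \<in> A"
  using assms(3,4)
proof (induction S rule: finite_induct)
  case empty then show ?case using A_zero[OF GA SA] by simp
next
  case (insert a S) then show ?case using SA unfolding graded_subalgebra_def by simp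
qed

lemma prod_in:
  fixes sm :: "'k::field \<Rightarrow> 'b::ring_1 \<Rightarrow> 'b"
  assumes GA: "graded_algebra sm Bd" and GAct: "graded_action sm Bd G act"
    and SA: "graded_subalgebra sm Bd A"
    and a: "a \<in> A" and a0: "hcomp Bd 0 a = 0" and r: "r \<in> invariants G act"
    and IH: "\<And>m f. m < n \<Longrightarrow> f \<in> Bd m \<Longrightarrow> f \<in> invariants G act \<Longrightarrow> f \<in> A"
  shows "hcomp Bd n (a * r) \<in> A"
proof -
  obtain Na where Na: "(\<forall>n. hcomp Bd n a \<in> Bd n) \<and> (\<forall>n\<ge>Na. hcomp Bd n a = 0) \<and> a = (\<Sum>n<Na. hcomp Bd n a)"
    using hcomp_props[OF GA] by blast
  obtain Nr where Nr: "(\<forall>n. hcomp Bd n r \<in> Bd n) \<and> (\<forall>n\<ge>Nr. hcomp Bd n r = 0) \<and> r = (\<Sum>n<Nr. hcomp Bd n r)"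
    using hcomp_props[OF GA] by blast
  have ae: "a = (\<Sum>i<Na. hcomp Bd i a)" using Na by blast
  have re: "r = (\<Sum>j<Nr. hcomp Bd j r)" using Nr by blast
  have "a * r = (\<Sum>i<Na. hcomp Bd i a) * (\<Sum>j<Nr. hcomp Bd j r)"
    using ae re by simp
  also have "\<dots> = (\<Sum>i<Na. \<Sum>j<Nr. hcomp Bd i a * hcomp Bd j r)"
    by (rule sum_product)
  finally have pe: "a * r = (\<Sum>i<Na. \<Sum>j<Nr. hcomp Bd i a * hcomp Bd j r)" .
  have "hcomp Bd n (a * r) = (\<Sum>i<Na. \<Sum>j<Nr. hcomp Bd n (hcomp Bd i a * hcomp Bd j r))"
    unfolding pe hcomp_sum[OF GA] ..
  also have "\<dots> = (\<Sum>i<Na. \<Sum>j<Nr. (if n = i + j then hcomp Bd i a * hcomp Bd j r else 0))"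
  proof (intro sum.cong refl)
    fix i j
    have "hcomp Bd i a * hcomp Bd j r \<in> Bd (i + j)" using Na Nr ga_mul[OF GA] by blast
    then show "hcomp Bd n (hcomp Bd i a * hcomp Bd j r) = (if n = i + j then hcomp Bd i a * hcomp Bd j r else 0)"
      by (rule hcomp_hom[OF GA])
  qed
  also have "\<dots> \<in> A"
  proof (intro A_sum[OF GA SA] ballI finite_lessThan)
    fix i j
    show "(if n = i + j then hcomp Bd i a * hcomp Bd j r else 0) \<in> A"
    proof (cases "n = i + j")
      case False then show ?thesis using A_zero[OF GA SA] by simp
    next
      case True
      show ?thesis
      proof (cases "i = 0")
        case True then show ?thesis using a0 A_zero[OF GA SA] by simp
      next
        case False
        have jn: "j < n" using False \<open>n = i + j\<close> by simp
        have "hcomp Bd j r \<in> A"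
          using IH[OF jn] Nr inv_hcomp[OF GA GAct r] by blast
        moreover have "hcomp Bd i a \<in> A" using a SA unfolding graded_subalgebra_def by blast
        ultimately have "hcomp Bd i a * hcomp Bd j r \<in> A" using SA unfolding graded_subalgebra_def by blast
        then show ?thesis using \<open>n = i + j\<close> by simp
      qed
    qed
  qed
  finally show ?thesis .
qed

theorem lemmaA12:
  fixes sm :: "'k::field \<Rightarrow> 'b::ring_1 \<Rightarrow> 'b"
    and Bd :: "nat \<Rightarrow> 'b set"
    and eps :: 'b
    and G :: "('g, 'm) monoid_scheme"
    and act :: "'g \<Rightarrow> 'b \<Rightarrow> 'b"
    and A :: "'b set"
  assumes "graded_algebra sm Bd"
    and "connected_graded sm Bd"
    and "eps = 1 \<or> eps = -1"
    and "graded_comm Bd eps"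
    and "group G"
    and "finite (carrier G)"
    and "of_nat (card (carrier G)) \<noteq> (0::'k)"
    and "graded_action sm Bd G act"
    and "graded_subalgebra sm Bd A"
    and "A \<subseteq> invariants G act"
    and "ideal_gen (aug Bd A) = ideal_gen (aug Bd (invariants G act))"
  shows "A = invariants G act"
proof -
  note GA = assms(1) and GAct = assms(8) and SA = assms(9) and grp = assms(5)
  note card = assms(7)
  define I where "I = invariants G act"
  have hom: "f \<in> A" if "f \<in> Bd n" "f \<in> I" for n f
    using that
  proof (induction n arbitrary: f rule: less_induct)
    case (less n)
    show ?case
    proof (cases "n = 0")
      case True
      then obtain c where "f = sm c 1" using less.prems assms(2) unfolding connected_graded_def by auto
      then show ?thesis using SA unfolding graded_subalgebra_def by blast
    next
      case False
      have f0: "hcomp Bd 0 f = 0" using hcomp_hom[OF GA less.prems(1)] False by simp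
      have "f \<in> ideal_gen (aug Bd I)"
        unfolding ideal_gen_def
      proof (intro CollectI exI conjI allI impI)
        show "(\<lambda>i. f) i \<in> aug Bd I" for i using f0 less.prems unfolding aug_def by simp
        have "{..<1::nat} = {0}" by auto
        then show "f = (\<Sum>i<(1::nat). (\<lambda>i. f) i * (\<lambda>i. 1) i)" by simp
      qed
      then have "f \<in> ideal_gen (aug Bd A)" using assms(11) I_def by simp
      then obtain k :: nat and x b :: "nat \<Rightarrow> 'b" where xk: "\<forall>i<k. x i \<in> aug Bd A" and fe: "f = (\<Sum>i<k. x i * b i)"
        unfolding ideal_gen_def by blast
      have xI: "x i \<in> I" if "i < k" for i using xk that assms(10) I_def unfolding aug_def by auto
      have "f = reyn sm G act f" using reyn_fix[OF GA card] less.prems I_def by simp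
      also have "\<dots> = (\<Sum>i<k. x i * reyn sm G act (b i))"
        unfolding fe reyn_sum[OF GA GAct] using reyn_lin[OF GA GAct] xI I_def by simp
      finally have fe2: "f = (\<Sum>i<k. x i * reyn sm G act (b i))" .
      have "f = hcomp Bd n f" using hcomp_hom[OF GA less.prems(1)] by simp
      also have "\<dots> = (\<Sum>i<k. hcomp Bd n (x i * reyn sm G act (b i)))"
        by (subst fe2) (rule hcomp_sum[OF GA])
      also have "\<dots> \<in> A"
      proof (intro A_sum[OF GA SA] ballI finite_lessThan)
        fix i assume "i \<in> {..<k}"
        then have "x i \<in> aug Bd A" using xk by simp
        then show "hcomp Bd n (x i * reyn sm G act (b i)) \<in> A"
          using prod_in[OF GA GAct SA _ _ reyn_inv[OF GA GAct grp], of "x i" n] less.IH I_def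
          unfolding aug_def by blast
      qed
      finally show ?thesis .
    qed
  qed
  show ?thesis
  proof
    show "A \<subseteq> invariants G act" by (rule assms(10))
    show "invariants G act \<subseteq> A"
    proof
      fix y assume y: "y \<in> invariants G act"
      obtain N where N: "(\<forall>n. hcomp Bd n y \<in> Bd n) \<and> (\<forall>n\<ge>N. hcomp Bd n y = 0) \<and> y = (\<Sum>n<N. hcomp Bd n y)"
        using hcomp_props[OF GA] by blast
      have ye: "y = (\<Sum>n<N. hcomp Bd n y)" using N by blast
      have "(\<Sum>n<N. hcomp Bd n y) \<in> A"
      proof (intro A_sum[OF GA SA] ballI finite_lessThan)
        fix n
        show "hcomp Bd n y \<in> A" using hom[of "hcomp Bd n y" n] N inv_hcomp[OF GA GAct y] I_def by blast
      qed
      then show "y \<in> A" using ye by simp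
    qed
  qed
qed

end
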